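(* Let $a<b$, let $F:(a,b)\to\mathcal{K}(\mathbb{R}^n)$ and let $x_0\in(a,b)$. (i) If $F$ is metrically differentiable from the right (respectively, from the left) at $x_0$, then $F$ is right (respectively, left) continuous at $x_0$ with respect to the Hausdorff metric, i.e. $\lim_{x\to x_0^+}\mathrm{haus}(F(x),F(x_0))=0$ (respectively, $\lim_{x\to x_0^-}\mathrm{haus}(F(x),F(x_0))=0$). (ii) If $F$ is constant on $(a,b)$, then for every $x\in(a,b)$ and every $y\in F(x)$ one has $D^M_+F(x)|_y=\{0\}$ and $D^M_-F(x)|_y=\{0\}$. (iii) If $F$ is metrically differentiable from the right (respectively, from the left) at $x_0$ and $y_0\in F(x_0)$ is such that $D^M_+F(x_0)|_{y_0}\neq\{0\}$ (respectively, $D^M_-F(x_0)|_{y_0}\neq\{0\}$), then $(x_0,y_0)$ lies on the boundary (in $\mathbb{R}\times\mathbb{R}^n$) of $\mathrm{Graph}(F)=\{(x,y): x\in(a,b),\ y\in F(x)\}$.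
   Context: $\mathcal{K}(\mathbb{R}^n)$ is the set of nonempty compact subsets of $\mathbb{R}^n$, $|\cdot|$ the Euclidean norm, $\mathrm{dist}(x,A)=\min_{a\in A}|x-a|$, and $\mathrm{haus}$ the Hausdorff distance. For $a\in\mathbb{R}^n$, $B\in\mathcal{K}(\mathbb{R}^n)$, $\Pi_B(a)=\{b\in B: |a-b|=\mathrm{dist}(a,B)\}$. For $A,B\in\mathcal{K}(\mathbb{R}^n)$ the set of metric pairs is $\Pi(A,B)=\{(a,b)\in A\times B: a\in\Pi_A(b)\text{ or } b\in\Pi_B(a)\}$. For $x_0\neq x$ in $(a,b)$ and $y_0\in F(x_0)$, the first metric divided difference anchored at $y_0$ is $[x_0,x]^MF|_{y_0}=\{\frac{y-y_0}{x-x_0}: (y_0,y)\in\Pi(F(x_0),F(x))\}$. $F$ is metrically differentiable from the right at $x_0$ if for every $y\in F(x_0)$ there is a nonempty set $D^M_+F(x_0)|_y$ of vectors such that for every $\epsilon>0$ there is $\delta>0$ with $\sup_{y\in F(x_0)}\mathrm{haus}(D^M_+F(x_0)|_y,[x_0,x]^MF|_y)<\epsilon$ whenever $0<x-x_0<\delta$; $D^M_+F(x_0)|_y$ is the right metric derivative of $F$ at $x_0$ anchored at $y$. Metric differentiability from the left and $D^M_-F(x_0)|_y$ are defined in the same way with $0<x_0-x<\delta$. *)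

theory Defs
  imports "HOL-Analysis.Analysis"
begin

text \<open>Hausdorff distance (intended for nonempty bounded sets).\<close>
definition haus :: "'a::euclidean_space set \<Rightarrow> 'a set \<Rightarrow> real" where
  "haus A B = max (SUP x\<in>A. infdist x B) (SUP y\<in>B. infdist y A)"

definition metric_proj :: "'a::euclidean_space set \<Rightarrow> 'a \<Rightarrow> 'a set" where
  "metric_proj B a = {b \<in> B. dist a b = infdist a B}"

definition metric_pairs :: "'a::euclidean_space set \<Rightarrow> 'a set \<Rightarrow> ('a \<times> 'a) set" where
  "metric_pairs A B = {(p, q). p \<in> A \<and> q \<in> B \<and> (p \<in> metric_proj A q \<or> q \<in> metric_proj B p)}"

definition metric_divdiff ::
  "(real \<Rightarrow> 'a::euclidean_space set) \<Rightarrow> real \<Rightarrow> real \<Rightarrow> 'a \<Rightarrow> 'a set" where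
  "metric_divdiff F x0 x y0 =
     {(1 / (x - x0)) *\<^sub>R (y - y0) | y. (y0, y) \<in> metric_pairs (F x0) (F x)}"

text \<open>D is the right metric derivative of F (defined on the interval (a,b)) at x0:
  D y is the derivative anchored at y, for y in F x0.  Boundedness of D y is implied by
  the Hausdorff distance to a compact set being finite; it is stated explicitly because
  the real-valued Sup used in haus is meaningless for unbounded sets.\<close>
definition has_right_metric_derivative ::
  "real \<Rightarrow> real \<Rightarrow> (real \<Rightarrow> 'a::euclidean_space set) \<Rightarrow> real \<Rightarrow> ('a \<Rightarrow> 'a set) \<Rightarrow> bool" where
  "has_right_metric_derivative a b F x0 D \<longleftrightarrow>
     (\<forall>y\<in>F x0. D y \<noteq> {} \<and> bounded (D y)) \<and>
     (\<forall>\<epsilon>>0. \<exists>\<delta>>0. \<forall>x\<in>{a<..<b}. 0 < x - x0 \<and> x - x0 < \<delta> \<longrightarrow>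
        (\<forall>y\<in>F x0. haus (D y) (metric_divdiff F x0 x y) < \<epsilon>))"

definition has_left_metric_derivative ::
  "real \<Rightarrow> real \<Rightarrow> (real \<Rightarrow> 'a::euclidean_space set) \<Rightarrow> real \<Rightarrow> ('a \<Rightarrow> 'a set) \<Rightarrow> bool" where
  "has_left_metric_derivative a b F x0 D \<longleftrightarrow>
     (\<forall>y\<in>F x0. D y \<noteq> {} \<and> bounded (D y)) \<and>
     (\<forall>\<epsilon>>0. \<exists>\<delta>>0. \<forall>x\<in>{a<..<b}. 0 < x0 - x \<and> x0 - x < \<delta> \<longrightarrow>
        (\<forall>y\<in>F x0. haus (D y) (metric_divdiff F x0 x y) < \<epsilon>))"

definition right_metric_differentiable ::
  "real \<Rightarrow> real \<Rightarrow> (real \<Rightarrow> 'a::euclidean_space set) \<Rightarrow> real \<Rightarrow> bool" where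
  "right_metric_differentiable a b F x0 \<longleftrightarrow> (\<exists>D. has_right_metric_derivative a b F x0 D)"

definition left_metric_differentiable ::
  "real \<Rightarrow> real \<Rightarrow> (real \<Rightarrow> 'a::euclidean_space set) \<Rightarrow> real \<Rightarrow> bool" where
  "left_metric_differentiable a b F x0 \<longleftrightarrow> (\<exists>D. has_left_metric_derivative a b F x0 D)"

definition mgraph :: "real \<Rightarrow> real \<Rightarrow> (real \<Rightarrow> 'a set) \<Rightarrow> (real \<times> 'a) set" where
  "mgraph a b F = {(x, y). x \<in> {a<..<b} \<and> y \<in> F x}"

end

theory Submission
  imports Defs
begin

lemma infdist_lt_ex:
  fixes B :: "'a::metric_space set"
  assumes "B \<noteq> {}" "infdist a B < e"
  shows "\<exists>b\<in>B. dist a b < e"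
proof -
  have "(INF b\<in>B. dist a b) < e" using assms by (simp add: infdist_notempty)
  moreover have "bdd_below (dist a ` B)" by (rule bdd_belowI2[of _ 0]) simp
  ultimately show ?thesis using assms(1) cINF_less_iff[of B "dist a" e] by blast
qed

lemma haus_lt_ex:
  fixes A B :: "'a::euclidean_space set"
  assumes "bounded A" "A \<noteq> {}" "B \<noteq> {}" "haus A B < e" "p \<in> A"
  shows "\<exists>q\<in>B. dist p q < e"
proof -
  obtain q0 where q0: "q0 \<in> B" using assms by blast
  obtain R where R: "\<forall>x\<in>A. norm x \<le> R" using assms(1) bounded_iff by blast
  have "bdd_above ((\<lambda>x. infdist x B) ` A)"
  proof (rule bdd_aboveI2)
    fix x assume "x \<in> A"
    have "infdist x B \<le> dist x q0" using q0 infdist_le by blast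
    also have "\<dots> \<le> norm x + norm q0" by (simp add: dist_norm norm_triangle_ineq4)
    also have "\<dots> \<le> R + norm q0" using R \<open>x \<in> A\<close> by auto
    finally show "infdist x B \<le> R + norm q0" .
  qed
  then have "infdist p B \<le> (SUP x\<in>A. infdist x B)" using assms(5) by (rule cSUP_upper2) simp
  also have "\<dots> \<le> haus A B" by (simp add: haus_def)
  finally have "infdist p B < e" using assms(4) by linarith
  then show ?thesis using infdist_lt_ex assms(3) by blast
qed

lemma haus_sym: "haus A B = haus B A"
  by (simp add: haus_def max.commute)


lemma divdiff_mem:
  "v \<in> metric_divdiff F x0 x y0 \<longleftrightarrow>
     (\<exists>y. v = (1 / (x - x0)) *\<^sub>R (y - y0) \<and> (y0, y) \<in> metric_pairs (F x0) (F x))"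
  by (auto simp: metric_divdiff_def)

lemma divdiff_bound:
  fixes F :: "real \<Rightarrow> 'a::euclidean_space set"
  assumes "compact (F x0)" "compact (F x)"
  shows "\<exists>M. \<forall>y0\<in>F x0. \<forall>v\<in>metric_divdiff F x0 x y0. norm v \<le> M"
proof -
  obtain R0 where R0: "\<forall>y\<in>F x0. norm y \<le> R0"
    using assms(1) compact_imp_bounded bounded_iff by metis
  obtain R1 where R1: "\<forall>y\<in>F x. norm y \<le> R1"
    using assms(2) compact_imp_bounded bounded_iff by metis
  have "norm v \<le> \<bar>1 / (x - x0)\<bar> * (R1 + R0)"
    if y0v: "y0 \<in> F x0" "v \<in> metric_divdiff F x0 x y0" for y0 v
  proof -
    obtain y where y: "v = (1 / (x - x0)) *\<^sub>R (y - y0)" "(y0, y) \<in> metric_pairs (F x0) (F x)"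
      using y0v(2) divdiff_mem by blast
    have yF: "y \<in> F x" using y(2) by (simp add: metric_pairs_def)
    have "norm (y - y0) \<le> R1 + R0"
      using R0 R1 yF that(1) norm_triangle_ineq4[of y y0] by fastforce
    then show ?thesis using y(1) by (simp add: divide_right_mono)
  qed
  then show ?thesis by blast
qed

lemma divdiff_nonempty:
  fixes F :: "real \<Rightarrow> 'a::euclidean_space set"
  assumes "compact (F x)" "F x \<noteq> {}" "y0 \<in> F x0"
  shows "metric_divdiff F x0 x y0 \<noteq> {}"
proof -
  obtain z where z: "z \<in> F x" "infdist y0 (F x) = dist y0 z"
    using infdist_attains_inf[OF compact_imp_closed[OF assms(1)] assms(2)] by metis
  have "(y0, z) \<in> metric_pairs (F x0) (F x)"
    using z assms(3) by (auto simp: metric_pairs_def metric_proj_def)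
  then show ?thesis using divdiff_mem by blast
qed

lemma divdiff_bounded:
  fixes F :: "real \<Rightarrow> 'a::euclidean_space set"
  assumes "compact (F x0)" "compact (F x)" "y0 \<in> F x0"
  shows "bounded (metric_divdiff F x0 x y0)"
  using divdiff_bound[OF assms(1,2)] assms(3) bounded_iff by metis

lemma D_bound:
  fixes F :: "real \<Rightarrow> 'a::euclidean_space set"
  assumes "\<forall>y\<in>F x0. D y \<noteq> {} \<and> bounded (D y)" "compact (F x0)" "compact (F x1)" "F x1 \<noteq> {}"
    "\<forall>y\<in>F x0. haus (D y) (metric_divdiff F x0 x1 y) < 1"
  shows "\<exists>M. \<forall>y\<in>F x0. \<forall>d\<in>D y. norm d \<le> M"
proof -
  obtain M where M: "\<forall>y0\<in>F x0. \<forall>v\<in>metric_divdiff F x0 x1 y0. norm v \<le> M"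
    using divdiff_bound[OF assms(2,3)] by blast
  have "norm d \<le> M + 1" if yd: "y \<in> F x0" "d \<in> D y" for y d
  proof -
    obtain v where v: "v \<in> metric_divdiff F x0 x1 y" "dist d v < 1"
      using haus_lt_ex[of "D y" "metric_divdiff F x0 x1 y" 1 d] assms yd
        divdiff_nonempty[OF assms(3,4) yd(1)] by blast
    have "norm d \<le> norm v + dist d v"
      using norm_triangle_ineq4[of d v] norm_triangle_ineq2[of d v] by (simp add: dist_norm)
    then show ?thesis using M v that by fastforce
  qed
  then show ?thesis by blast
qed

lemma divdiff_small:
  fixes F :: "real \<Rightarrow> 'a::euclidean_space set"
  assumes "\<forall>y\<in>F x0. D y \<noteq> {} \<and> bounded (D y)" "compact (F x0)" "compact (F x)"
    "\<forall>y\<in>F x0. \<forall>d\<in>D y. norm d \<le> M"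
    "\<forall>y\<in>F x0. haus (D y) (metric_divdiff F x0 x y) < 1"
  shows "\<forall>y0\<in>F x0. \<forall>v\<in>metric_divdiff F x0 x y0. norm v \<le> M + 1"
proof (intro ballI)
  fix y0 v assume y0: "y0 \<in> F x0" and v: "v \<in> metric_divdiff F x0 x y0"
  have "haus (metric_divdiff F x0 x y0) (D y0) < 1" using assms(5) y0 haus_sym by metis
  then obtain d where d: "d \<in> D y0" "dist v d < 1"
    using haus_lt_ex[of "metric_divdiff F x0 x y0" "D y0" 1 v] divdiff_bounded[OF assms(2,3) y0]
      v assms(1) y0 by blast
  have "norm v \<le> norm d + dist v d"
    using norm_triangle_ineq4[of v d] norm_triangle_ineq2[of v d] by (simp add: dist_norm)
  then show "norm v \<le> M + 1" using assms(4) d y0 by fastforce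
qed

lemma haus_bound:
  fixes F :: "real \<Rightarrow> 'a::euclidean_space set"
  assumes "compact (F x0)" "F x0 \<noteq> {}" "compact (F x)" "F x \<noteq> {}" "x \<noteq> x0"
    "\<forall>y0\<in>F x0. \<forall>v\<in>metric_divdiff F x0 x y0. norm v \<le> K"
  shows "0 \<le> haus (F x) (F x0) \<and> haus (F x) (F x0) \<le> \<bar>x - x0\<bar> * K"
proof -
  have key: "dist y0 z \<le> \<bar>x - x0\<bar> * K" if "(y0, z) \<in> metric_pairs (F x0) (F x)" for y0 z
  proof -
    have y0: "y0 \<in> F x0" using that by (simp add: metric_pairs_def)
    have "(1 / (x - x0)) *\<^sub>R (z - y0) \<in> metric_divdiff F x0 x y0" using that divdiff_mem by blast
    then have "norm ((1 / (x - x0)) *\<^sub>R (z - y0)) \<le> K" using assms(6) y0 by blast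
    then have "norm (z - y0) / \<bar>x - x0\<bar> \<le> K" by simp
    then have "norm (z - y0) \<le> \<bar>x - x0\<bar> * K" using assms(5) by (simp add: divide_le_eq mult.commute)
    then show ?thesis by (simp add: dist_norm norm_minus_commute)
  qed
  have A: "infdist z (F x0) \<le> \<bar>x - x0\<bar> * K" if "z \<in> F x" for z
  proof -
    obtain y0 where y0: "y0 \<in> F x0" "infdist z (F x0) = dist z y0"
      using infdist_attains_inf[OF compact_imp_closed[OF assms(1)] assms(2)] by metis
    have "(y0, z) \<in> metric_pairs (F x0) (F x)"
      using y0 that by (auto simp: metric_pairs_def metric_proj_def)
    then show ?thesis using key y0 by (simp add: dist_commute)
  qed
  have B: "infdist y0 (F x) \<le> \<bar>x - x0\<bar> * K" if "y0 \<in> F x0" for y0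
  proof -
    obtain z where z: "z \<in> F x" "infdist y0 (F x) = dist y0 z"
      using infdist_attains_inf[OF compact_imp_closed[OF assms(3)] assms(4)] by metis
    have "(y0, z) \<in> metric_pairs (F x0) (F x)"
      using z that by (auto simp: metric_pairs_def metric_proj_def)
    then show ?thesis using key z by simp
  qed
  have S1: "(SUP z\<in>F x. infdist z (F x0)) \<le> \<bar>x - x0\<bar> * K"
    using A assms(4) by (intro cSUP_least) auto
  have S2: "(SUP y\<in>F x0. infdist y (F x)) \<le> \<bar>x - x0\<bar> * K"
    using B assms(2) by (intro cSUP_least) auto
  obtain z0 where z0: "z0 \<in> F x" using assms(4) by blast
  have "bdd_above ((\<lambda>z. infdist z (F x0)) ` F x)"
    using A by (intro bdd_aboveI2) auto
  then have "infdist z0 (F x0) \<le> (SUP z\<in>F x. infdist z (F x0))"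
    using z0 by (rule cSUP_upper2) simp
  then have "0 \<le> (SUP z\<in>F x. infdist z (F x0))" using infdist_nonneg order_trans by blast
  then show ?thesis using S1 S2 by (simp add: haus_def)
qed

lemma local_bound:
  fixes F :: "real \<Rightarrow> 'a::euclidean_space set"
  assumes "\<forall>y\<in>F x0. D y \<noteq> {} \<and> bounded (D y)" "compact (F x0)" "F x0 \<noteq> {}"
    "compact (F x)" "F x \<noteq> {}" "x \<noteq> x0"
    "\<forall>y\<in>F x0. \<forall>d\<in>D y. norm d \<le> M"
    "\<forall>y\<in>F x0. haus (D y) (metric_divdiff F x0 x y) < 1"
  shows "0 \<le> haus (F x) (F x0) \<and> haus (F x) (F x0) \<le> \<bar>x - x0\<bar> * (M + 1)"
  using haus_bound[OF assms(2-6) divdiff_small[OF assms(1,2,4,7,8)]] .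

lemma pairs_diag:
  assumes "(p, q) \<in> metric_pairs A A"
  shows "p = q"
  using assms by (auto simp: metric_pairs_def metric_proj_def)

lemma frontier_aux:
  fixes F :: "real \<Rightarrow> 'a::euclidean_space set"
  assumes "ball (x0, y0) r \<subseteq> mgraph a b F" "x \<in> {a<..<b}" "x \<noteq> x0"
    "d \<in> D y0" "d \<noteq> 0" "bounded (D y0)" "metric_divdiff F x0 x y0 \<noteq> {}"
    "haus (D y0) (metric_divdiff F x0 x y0) < norm d / 2"
    "\<bar>x - x0\<bar> * (2 * norm d) < r" "\<bar>x - x0\<bar> < r"
  shows False
proof -
  obtain v where v: "v \<in> metric_divdiff F x0 x y0" "dist d v < norm d / 2"
    using haus_lt_ex[OF assms(6) _ assms(7,8,4)] assms(4) by blast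
  have nv: "norm d / 2 < norm v" "norm v < 2 * norm d"
    using v(2) norm_triangle_ineq4[of d v] norm_triangle_ineq2[of d v]
      norm_triangle_ineq2[of v d] assms(5)
    by (auto simp: dist_norm norm_minus_commute)
  obtain z where z: "v = (1 / (x - x0)) *\<^sub>R (z - y0)" "(y0, z) \<in> metric_pairs (F x0) (F x)"
    using v(1) divdiff_mem by blast
  have zv: "z - y0 = (x - x0) *\<^sub>R v" using z(1) assms(3) by simp
  have nz: "norm (z - y0) < r"
  proof -
    have "norm (z - y0) = \<bar>x - x0\<bar> * norm v" using zv by simp
    also have "\<dots> \<le> \<bar>x - x0\<bar> * (2 * norm d)" using nv by (intro mult_left_mono) auto
    finally show ?thesis using assms(9) by linarith
  qed
  have "(x, y0) \<in> ball (x0, y0) r" using assms(10) by (simp add: dist_Pair_Pair dist_real_def abs_minus_commute)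
  then have y0x: "y0 \<in> F x" using assms(1) by (auto simp: mgraph_def)
  have "(x0, z) \<in> ball (x0, y0) r" using nz by (simp add: dist_Pair_Pair dist_norm norm_minus_commute)
  then have zx0: "z \<in> F x0" using assms(1) by (auto simp: mgraph_def)
  have "z = y0" using z(2) y0x zx0 by (auto simp: metric_pairs_def metric_proj_def)
  then have "v = 0" using z(1) by simp
  then show False using nv by simp
qed

lemma min_half: "(0::real) < p \<Longrightarrow> 0 < q \<Longrightarrow> \<exists>m. 0 < m \<and> m < p \<and> m < q"
  by (rule exI[of _ "min p q / 2"]) auto

lemma min3_half: "(0::real) < p \<Longrightarrow> 0 < q \<Longrightarrow> 0 < r \<Longrightarrow>
   \<exists>m. 0 < m \<and> m < p \<and> m < q \<and> m < r"
  by (rule exI[of _ "min p (min q r) / 2"]) auto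

theorem mainTheorem1:
  fixes a b x0 :: real and F :: "real \<Rightarrow> 'a::euclidean_space set"
  assumes "a < b"
    and "\<forall>x\<in>{a<..<b}. compact (F x) \<and> F x \<noteq> {}"
    and "x0 \<in> {a<..<b}"
  shows
    "(right_metric_differentiable a b F x0 \<longrightarrow>
        ((\<lambda>x. haus (F x) (F x0)) \<longlongrightarrow> 0) (at_right x0))
     \<and> (left_metric_differentiable a b F x0 \<longrightarrow>
        ((\<lambda>x. haus (F x) (F x0)) \<longlongrightarrow> 0) (at_left x0))
     \<and> ((\<forall>x\<in>{a<..<b}. \<forall>x'\<in>{a<..<b}. F x = F x') \<longrightarrow>
        (\<forall>x\<in>{a<..<b}.
           right_metric_differentiable a b F x \<and> left_metric_differentiable a b F x \<and>
           (\<forall>D. has_right_metric_derivative a b F x D \<longrightarrow> (\<forall>y\<in>F x. D y = {0})) \<and>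
           (\<forall>D. has_left_metric_derivative a b F x D \<longrightarrow> (\<forall>y\<in>F x. D y = {0}))))
     \<and> (\<forall>y0\<in>F x0. \<forall>D. has_right_metric_derivative a b F x0 D \<and> D y0 \<noteq> {0}
           \<longrightarrow> (x0, y0) \<in> frontier (mgraph a b F))
     \<and> (\<forall>y0\<in>F x0. \<forall>D. has_left_metric_derivative a b F x0 D \<and> D y0 \<noteq> {0}
           \<longrightarrow> (x0, y0) \<in> frontier (mgraph a b F))"
  proof -
  have cF: "\<And>x. x \<in> {a<..<b} \<Longrightarrow> compact (F x)" and nF: "\<And>x. x \<in> {a<..<b} \<Longrightarrow> F x \<noteq> {}"
    using assms(2) by auto
  have x0ab: "a < x0" "x0 < b" using assms(3) by auto
  have P1: "((\<lambda>x. haus (F x) (F x0)) \<longlongrightarrow> 0) (at_right x0)"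
    if rd: "right_metric_differentiable a b F x0"
  proof -
    obtain D where hD: "has_right_metric_derivative a b F x0 D"
      using rd right_metric_differentiable_def by blast
    have Db: "\<forall>y\<in>F x0. D y \<noteq> {} \<and> bounded (D y)"
      using hD has_right_metric_derivative_def by blast
    obtain \<delta> where d: "\<delta> > 0" "\<forall>x\<in>{a<..<b}. 0 < x - x0 \<and> x - x0 < \<delta> \<longrightarrow>
        (\<forall>y\<in>F x0. haus (D y) (metric_divdiff F x0 x y) < 1)"
      using hD unfolding has_right_metric_derivative_def by (meson zero_less_one)
    obtain m where m: "0 < m" "m < \<delta>" "m < b - x0"
      using min_half[of \<delta> "b - x0"] d(1) x0ab by auto
    define x1 where "x1 = x0 + m"
    have x1: "x1 \<in> {a<..<b}" "0 < x1 - x0" "x1 - x0 < \<delta>"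
      using m x0ab unfolding x1_def by auto
    obtain M where M: "\<forall>y\<in>F x0. \<forall>d\<in>D y. norm d \<le> M"
      using D_bound[OF Db cF[OF assms(3)] cF[OF x1(1)] nF[OF x1(1)]] d(2) x1 by blast
    have ev: "eventually (\<lambda>x. x \<in> {x0<..<min b (x0 + \<delta>)}) (at_right x0)"
      using d(1) x0ab by (intro eventually_at_right_real) auto
    have ev2: "eventually (\<lambda>x. 0 \<le> haus (F x) (F x0) \<and> haus (F x) (F x0) \<le> \<bar>x - x0\<bar> * (M + 1)) (at_right x0)"
    proof (rule eventually_mono[OF ev])
      fix x assume x: "x \<in> {x0<..<min b (x0 + \<delta>)}"
      then have xab: "x \<in> {a<..<b}" using x0ab by auto
      show "0 \<le> haus (F x) (F x0) \<and> haus (F x) (F x0) \<le> \<bar>x - x0\<bar> * (M + 1)"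
        using local_bound[OF Db cF[OF assms(3)] nF[OF assms(3)] cF[OF xab] nF[OF xab] _ M] d(2) xab x
        by auto
    qed
    have lim: "((\<lambda>x. \<bar>x - x0\<bar> * (M + 1)) \<longlongrightarrow> \<bar>x0 - x0\<bar> * (M + 1)) (at_right x0)"
      by (intro tendsto_intros)
    show ?thesis
    proof (rule tendsto_sandwich[of "\<lambda>_. 0" _ _ "\<lambda>x. \<bar>x - x0\<bar> * (M + 1)"])
      show "\<forall>\<^sub>F x in at_right x0. 0 \<le> haus (F x) (F x0)" using ev2 by (rule eventually_mono) blast
      show "\<forall>\<^sub>F x in at_right x0. haus (F x) (F x0) \<le> \<bar>x - x0\<bar> * (M + 1)" using ev2 by (rule eventually_mono) blast
      show "((\<lambda>x. \<bar>x - x0\<bar> * (M + 1)) \<longlongrightarrow> 0) (at_right x0)" using lim by simp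
    qed simp
  qed
  have P2: "((\<lambda>x. haus (F x) (F x0)) \<longlongrightarrow> 0) (at_left x0)"
    if rd: "left_metric_differentiable a b F x0"
  proof -
    obtain D where hD: "has_left_metric_derivative a b F x0 D"
      using rd left_metric_differentiable_def by blast
    have Db: "\<forall>y\<in>F x0. D y \<noteq> {} \<and> bounded (D y)"
      using hD has_left_metric_derivative_def by blast
    obtain \<delta> where d: "\<delta> > 0" "\<forall>x\<in>{a<..<b}. 0 < x0 - x \<and> x0 - x < \<delta> \<longrightarrow>
        (\<forall>y\<in>F x0. haus (D y) (metric_divdiff F x0 x y) < 1)"
      using hD unfolding has_left_metric_derivative_def by (meson zero_less_one)
    obtain m where m: "0 < m" "m < \<delta>" "m < x0 - a"
      using min_half[of \<delta> "x0 - a"] d(1) x0ab by auto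
    define x1 where "x1 = x0 - m"
    have x1: "x1 \<in> {a<..<b}" "0 < x0 - x1" "x0 - x1 < \<delta>"
      using m x0ab unfolding x1_def by auto
    obtain M where M: "\<forall>y\<in>F x0. \<forall>d\<in>D y. norm d \<le> M"
      using D_bound[OF Db cF[OF assms(3)] cF[OF x1(1)] nF[OF x1(1)]] d(2) x1 by blast
    have ev: "eventually (\<lambda>x. x \<in> {max a (x0 - \<delta>)<..<x0}) (at_left x0)"
      using d(1) x0ab by (intro eventually_at_left_real) auto
    have ev2: "eventually (\<lambda>x. 0 \<le> haus (F x) (F x0) \<and> haus (F x) (F x0) \<le> \<bar>x - x0\<bar> * (M + 1)) (at_left x0)"
    proof (rule eventually_mono[OF ev])
      fix x assume x: "x \<in> {max a (x0 - \<delta>)<..<x0}"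
      then have xab: "x \<in> {a<..<b}" using x0ab by auto
      show "0 \<le> haus (F x) (F x0) \<and> haus (F x) (F x0) \<le> \<bar>x - x0\<bar> * (M + 1)"
        using local_bound[OF Db cF[OF assms(3)] nF[OF assms(3)] cF[OF xab] nF[OF xab] _ M] d(2) xab x
        by auto
    qed
    have lim: "((\<lambda>x. \<bar>x - x0\<bar> * (M + 1)) \<longlongrightarrow> \<bar>x0 - x0\<bar> * (M + 1)) (at_left x0)"
      by (intro tendsto_intros)
    show ?thesis
    proof (rule tendsto_sandwich[of "\<lambda>_. 0" _ _ "\<lambda>x. \<bar>x - x0\<bar> * (M + 1)"])
      show "\<forall>\<^sub>F x in at_left x0. 0 \<le> haus (F x) (F x0)" using ev2 by (rule eventually_mono) blast
      show "\<forall>\<^sub>F x in at_left x0. haus (F x) (F x0) \<le> \<bar>x - x0\<bar> * (M + 1)" using ev2 by (rule eventually_mono) blast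
      show "((\<lambda>x. \<bar>x - x0\<bar> * (M + 1)) \<longlongrightarrow> 0) (at_left x0)" using lim by simp
    qed simp
  qed
  have P3: "\<forall>x\<in>{a<..<b}.
           right_metric_differentiable a b F x \<and> left_metric_differentiable a b F x \<and>
           (\<forall>D. has_right_metric_derivative a b F x D \<longrightarrow> (\<forall>y\<in>F x. D y = {0})) \<and>
           (\<forall>D. has_left_metric_derivative a b F x D \<longrightarrow> (\<forall>y\<in>F x. D y = {0}))"
    if const: "\<forall>x\<in>{a<..<b}. \<forall>x'\<in>{a<..<b}. F x = F x'"
  proof (intro ballI)
    fix x assume xab: "x \<in> {a<..<b}"
    have dd: "metric_divdiff F x x' y = {0}" if "x' \<in> {a<..<b}" "y \<in> F x" for x' y
    proof -
      have eq: "F x' = F x" using const xab that(1) by blast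
      have yy: "(y, y) \<in> metric_pairs (F x) (F x')"
        using eq that(2) by (auto simp: metric_pairs_def metric_proj_def)
      have zy: "z = y" if "(y, z) \<in> metric_pairs (F x) (F x')" for z
        using pairs_diag[of y z "F x"] that eq by simp
      show ?thesis
      proof (intro equalityI subsetI)
        fix v assume "v \<in> metric_divdiff F x x' y"
        then obtain z where z: "v = (1 / (x' - x)) *\<^sub>R (z - y)" "(y, z) \<in> metric_pairs (F x) (F x')"
          using divdiff_mem by blast
        show "v \<in> {0}" using z zy by simp
      next
        fix v :: 'a assume "v \<in> {0}"
        then have "v = (1 / (x' - x)) *\<^sub>R (y - y)" by simp
        then show "v \<in> metric_divdiff F x x' y" using yy divdiff_mem by blast
      qed
    qed
    have h0: "haus {0::'a} {0} = 0" by (simp add: haus_def)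
    have R: "has_right_metric_derivative a b F x (\<lambda>y. {0})"
    proof -
      have "\<forall>\<epsilon>>0. \<exists>\<delta>>0. \<forall>x'\<in>{a<..<b}. 0 < x' - x \<and> x' - x < \<delta> \<longrightarrow> (\<forall>y\<in>F x. haus {0} (metric_divdiff F x x' y) < \<epsilon>)"
      proof (intro allI impI)
        fix \<epsilon> :: real assume e: "\<epsilon> > 0"
        have "\<forall>x'\<in>{a<..<b}. 0 < x' - x \<and> x' - x < 1 \<longrightarrow> (\<forall>y\<in>F x. haus {0} (metric_divdiff F x x' y) < \<epsilon>)"
          using dd h0 e by simp
        then show "\<exists>\<delta>>0. \<forall>x'\<in>{a<..<b}. 0 < x' - x \<and> x' - x < \<delta> \<longrightarrow> (\<forall>y\<in>F x. haus {0} (metric_divdiff F x x' y) < \<epsilon>)"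
          using zero_less_one by blast
      qed
      then show ?thesis by (simp add: has_right_metric_derivative_def)
    qed
    have L: "has_left_metric_derivative a b F x (\<lambda>y. {0})"
    proof -
      have "\<forall>\<epsilon>>0. \<exists>\<delta>>0. \<forall>x'\<in>{a<..<b}. 0 < x - x' \<and> x - x' < \<delta> \<longrightarrow> (\<forall>y\<in>F x. haus {0} (metric_divdiff F x x' y) < \<epsilon>)"
      proof (intro allI impI)
        fix \<epsilon> :: real assume e: "\<epsilon> > 0"
        have "\<forall>x'\<in>{a<..<b}. 0 < x - x' \<and> x - x' < 1 \<longrightarrow> (\<forall>y\<in>F x. haus {0} (metric_divdiff F x x' y) < \<epsilon>)"
          using dd h0 e by simp
        then show "\<exists>\<delta>>0. \<forall>x'\<in>{a<..<b}. 0 < x - x' \<and> x - x' < \<delta> \<longrightarrow> (\<forall>y\<in>F x. haus {0} (metric_divdiff F x x' y) < \<epsilon>)"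
          using zero_less_one by blast
      qed
      then show ?thesis by (simp add: has_left_metric_derivative_def)
    qed
    have U: "D y = {0}" if Db: "\<forall>y\<in>F x. D y \<noteq> {} \<and> bounded (D y)"
      and ex: "\<And>e. e > 0 \<Longrightarrow> \<exists>x'\<in>{a<..<b}. x' \<noteq> x \<and> haus (D y) (metric_divdiff F x x' y) < e"
      and y: "y \<in> F x" for D y
    proof -
      have "d = 0" if d: "d \<in> D y" for d
      proof (rule ccontr)
        assume "d \<noteq> 0"
        then have "norm d > 0" by simp
        then obtain x' where x': "x' \<in> {a<..<b}" "x' \<noteq> x" "haus (D y) (metric_divdiff F x x' y) < norm d"
          using ex by blast
        then have "haus (D y) {0} < norm d" using dd y by simp
        then obtain q where "q \<in> {0::'a}" "dist d q < norm d"
          using haus_lt_ex[of "D y" "{0}" "norm d" d] Db y d by blast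
        then show False by simp
      qed
      then show ?thesis using Db y by blast
    qed
    show "right_metric_differentiable a b F x \<and> left_metric_differentiable a b F x \<and>
           (\<forall>D. has_right_metric_derivative a b F x D \<longrightarrow> (\<forall>y\<in>F x. D y = {0})) \<and>
           (\<forall>D. has_left_metric_derivative a b F x D \<longrightarrow> (\<forall>y\<in>F x. D y = {0}))"
    proof (intro conjI allI impI ballI)
      show "right_metric_differentiable a b F x" using R right_metric_differentiable_def by blast
      show "left_metric_differentiable a b F x" using L left_metric_differentiable_def by blast
    next
      fix D y assume hD: "has_right_metric_derivative a b F x D" and y: "y \<in> F x"
      show "D y = {0}"
      proof (rule U[OF _ _ y])
        show "\<forall>y\<in>F x. D y \<noteq> {} \<and> bounded (D y)" using hD has_right_metric_derivative_def by blast
        fix e :: real assume e: "e > 0"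
        then obtain \<delta> where d: "\<delta> > 0" "\<forall>x'\<in>{a<..<b}. 0 < x' - x \<and> x' - x < \<delta> \<longrightarrow>
          (\<forall>y\<in>F x. haus (D y) (metric_divdiff F x x' y) < e)"
          using hD unfolding has_right_metric_derivative_def by blast
        obtain m where m: "0 < m" "m < \<delta>" "m < b - x"
      using min_half[of \<delta> "b - x"] d(1) xab by auto
    define x' where "x' = x + m"
        have xx: "x' \<in> {a<..<b}" "0 < x' - x" "x' - x < \<delta>"
          using m xab unfolding x'_def by auto
        then have "haus (D y) (metric_divdiff F x x' y) < e" using d(2) y by blast
        moreover have "x' \<noteq> x" using xx by auto
        ultimately show "\<exists>x'\<in>{a<..<b}. x' \<noteq> x \<and> haus (D y) (metric_divdiff F x x' y) < e"
          using xx(1) by blast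
      qed
    next
      fix D y assume hD: "has_left_metric_derivative a b F x D" and y: "y \<in> F x"
      show "D y = {0}"
      proof (rule U[OF _ _ y])
        show "\<forall>y\<in>F x. D y \<noteq> {} \<and> bounded (D y)" using hD has_left_metric_derivative_def by blast
        fix e :: real assume e: "e > 0"
        then obtain \<delta> where d: "\<delta> > 0" "\<forall>x'\<in>{a<..<b}. 0 < x - x' \<and> x - x' < \<delta> \<longrightarrow>
          (\<forall>y\<in>F x. haus (D y) (metric_divdiff F x x' y) < e)"
          using hD unfolding has_left_metric_derivative_def by blast
        obtain m where m: "0 < m" "m < \<delta>" "m < x - a"
      using min_half[of \<delta> "x - a"] d(1) xab by auto
    define x' where "x' = x - m"
        have xx: "x' \<in> {a<..<b}" "0 < x - x'" "x - x' < \<delta>"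
          using m xab unfolding x'_def by auto
        then have "haus (D y) (metric_divdiff F x x' y) < e" using d(2) y by blast
        moreover have "x' \<noteq> x" using xx by auto
        ultimately show "\<exists>x'\<in>{a<..<b}. x' \<noteq> x \<and> haus (D y) (metric_divdiff F x x' y) < e"
          using xx(1) by blast
      qed
    qed
  qed
  have x0g: "(x0, y0) \<in> mgraph a b F" if "y0 \<in> F x0" for y0
    using that assms(3) by (simp add: mgraph_def)
  have P4: "(x0, y0) \<in> frontier (mgraph a b F)"
    if y0: "y0 \<in> F x0" and hD: "has_right_metric_derivative a b F x0 D" and D0: "D y0 \<noteq> {0}" for y0 D
  proof -
    have Db: "D y0 \<noteq> {}" "bounded (D y0)" using hD y0 has_right_metric_derivative_def by blast+
    obtain d where d: "d \<in> D y0" "d \<noteq> 0" using Db(1) D0 by blast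
    have "(x0, y0) \<notin> interior (mgraph a b F)"
    proof
      assume "(x0, y0) \<in> interior (mgraph a b F)"
      then obtain r where r: "r > 0" "ball (x0, y0) r \<subseteq> mgraph a b F"
        using mem_interior by blast
      have nd: "norm d / 2 > 0" using d(2) by simp
      obtain \<delta> where dl: "\<delta> > 0" "\<forall>x\<in>{a<..<b}. 0 < x - x0 \<and> x - x0 < \<delta> \<longrightarrow>
          (\<forall>y\<in>F x0. haus (D y) (metric_divdiff F x0 x y) < norm d / 2)"
        using hD nd unfolding has_right_metric_derivative_def by blast
      have rp: "r / (2 * norm d + 1) > 0" using r(1) by (simp add: add_nonneg_pos)
      obtain t where t: "0 < t" "t < \<delta>" "t < b - x0" "t < r / (2 * norm d + 1)"
        using min3_half[of \<delta> "b - x0" "r / (2 * norm d + 1)"] dl(1) x0ab rp by auto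
      have "t * (2 * norm d + 1) < r" using t(4) by (simp add: pos_less_divide_eq add_nonneg_pos)
      moreover have "t * (2 * norm d) \<le> t * (2 * norm d + 1)" "t \<le> t * (2 * norm d + 1)"
        using t(1) by (simp_all add: algebra_simps)
      ultimately have t2: "t * (2 * norm d) < r" "t < r" by linarith+
      have xab: "x0 + t \<in> {a<..<b}" using t x0ab by auto
      have hl: "haus (D y0) (metric_divdiff F x0 (x0 + t) y0) < norm d / 2"
        using dl(2) xab t(1,2) y0 by simp
      have ab: "\<bar>(x0 + t) - x0\<bar> = t" using t(1) by simp
      have ne: "x0 + t \<noteq> x0" using t(1) by simp
      show False
        using frontier_aux[where D=D and d=d, OF r(2) xab ne d Db(2) divdiff_nonempty[OF cF[OF xab] nF[OF xab] y0] hl]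
          t2 unfolding ab by blast
    qed
    then show ?thesis using x0g[OF y0] closure_subset by (auto simp: frontier_def)
  qed
  have P5: "(x0, y0) \<in> frontier (mgraph a b F)"
    if y0: "y0 \<in> F x0" and hD: "has_left_metric_derivative a b F x0 D" and D0: "D y0 \<noteq> {0}" for y0 D
  proof -
    have Db: "D y0 \<noteq> {}" "bounded (D y0)" using hD y0 has_left_metric_derivative_def by blast+
    obtain d where d: "d \<in> D y0" "d \<noteq> 0" using Db(1) D0 by blast
    have "(x0, y0) \<notin> interior (mgraph a b F)"
    proof
      assume "(x0, y0) \<in> interior (mgraph a b F)"
      then obtain r where r: "r > 0" "ball (x0, y0) r \<subseteq> mgraph a b F"
        using mem_interior by blast
      have nd: "norm d / 2 > 0" using d(2) by simp
      obtain \<delta> where dl: "\<delta> > 0" "\<forall>x\<in>{a<..<b}. 0 < x0 - x \<and> x0 - x < \<delta> \<longrightarrow>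
          (\<forall>y\<in>F x0. haus (D y) (metric_divdiff F x0 x y) < norm d / 2)"
        using hD nd unfolding has_left_metric_derivative_def by blast
      have rp: "r / (2 * norm d + 1) > 0" using r(1) by (simp add: add_nonneg_pos)
      obtain t where t: "0 < t" "t < \<delta>" "t < x0 - a" "t < r / (2 * norm d + 1)"
        using min3_half[of \<delta> "x0 - a" "r / (2 * norm d + 1)"] dl(1) x0ab rp by auto
      have "t * (2 * norm d + 1) < r" using t(4) by (simp add: pos_less_divide_eq add_nonneg_pos)
      moreover have "t * (2 * norm d) \<le> t * (2 * norm d + 1)" "t \<le> t * (2 * norm d + 1)"
        using t(1) by (simp_all add: algebra_simps)
      ultimately have t2: "t * (2 * norm d) < r" "t < r" by linarith+
      have xab: "x0 - t \<in> {a<..<b}" using t x0ab by auto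
      have hl: "haus (D y0) (metric_divdiff F x0 (x0 - t) y0) < norm d / 2"
        using dl(2) xab t(1,2) y0 by simp
      have ab: "\<bar>(x0 - t) - x0\<bar> = t" using t(1) by simp
      have ne: "x0 - t \<noteq> x0" using t(1) by simp
      show False
        using frontier_aux[where D=D and d=d, OF r(2) xab ne d Db(2) divdiff_nonempty[OF cF[OF xab] nF[OF xab] y0] hl]
          t2 unfolding ab by blast
    qed
    then show ?thesis using x0g[OF y0] closure_subset by (auto simp: frontier_def)
  qed
  show ?thesis using P1 P2 P3 P4 P5 by blast
qed

end
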